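(* Let $C<\infty$. For each $n$, let $X_1,\dots,X_n$ be independent random variables taking values in $[0,1]$, where each $X_i$ has a continuous density $f_{X_i}$ with $\sup_x f_{X_i}(x)\le C$ ($C$ independent of $n$ and $i$). Let $X_{(1)}\le\dots\le X_{(n)}$ be the order statistics and $T=\min_{1\le i\le n-1}(X_{(i+1)}-X_{(i)})$. Then for every $\eta>0$ and every $x>0$, \[ \Pr\big(n^{2+\eta}T>x\big)\to1\quad(n\to\infty), \] i.e. $n^{2+\eta}T\to\infty$ in probability. *)

theory Defs
  imports "HOL-Probability.Probability"
begin

text \<open>Minimal spacing of a list of reals: sort the values (order statistics
  X_(1) <= ... <= X_(n)) and take the minimum of consecutive differences
  X_(i+1) - X_(i), 1 <= i <= n-1 (meaningful for length >= 2).\<close>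
definition min_spacing :: "real list \<Rightarrow> real" where
  "min_spacing xs = (let ys = sort xs in Min {ys ! (i+1) - ys ! i | i. i + 1 < length ys})"

end

theory Submission imports Defs begin

lemma (in prob_space) indep_vars_reindex:
  assumes "indep_vars M' X I" "inj_on g J" "g ` J \<subseteq> I"
  shows "indep_vars (\<lambda>j. M' (g j)) (\<lambda>j. X (g j)) J"
proof -
  define F where "F = (\<lambda>i. {X i -` A \<inter> space M | A. A \<in> sets (M' i)})"
  from assms(1) have rv: "\<forall>i\<in>I. random_variable (M' i) (X i)" and ind: "indep_sets F I"
    unfolding indep_vars_def2 F_def by auto
  have "indep_sets (\<lambda>j. F (g j)) J"
    unfolding indep_sets_def
  proof (intro conjI ballI allI impI)
    fix j assume "j \<in> J" then show "F (g j) \<subseteq> events"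
      using ind assms(3) unfolding indep_sets_def by auto
  next
    fix K A assume K: "K \<subseteq> J" "K \<noteq> {}" "finite K" and A: "A \<in> Pi K (\<lambda>j. F (g j))"
    define B where "B = (\<lambda>m. A (the_inv_into K g m))"
    have injK: "inj_on g K" using assms(2) K inj_on_subset by blast
    have BA: "\<And>k. k \<in> K \<Longrightarrow> B (g k) = A k" using injK by (simp add: B_def the_inv_into_f_f)
    have "prob (\<Inter>m\<in>g`K. B m) = (\<Prod>m\<in>g`K. prob (B m))"
      apply (rule indep_setsD[OF ind])
      using K assms(3) A BA by (auto simp: Pi_iff)
    moreover have "(\<Inter>m\<in>g`K. B m) = (\<Inter>k\<in>K. A k)" using BA by auto
    moreover have "(\<Prod>m\<in>g`K. prob (B m)) = (\<Prod>k\<in>K. prob (A k))"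
    proof -
      have "(\<Prod>m\<in>g`K. prob (B m)) = (\<Prod>k\<in>K. prob (B (g k)))" by (simp add: prod.reindex[OF injK])
      also have "\<dots> = (\<Prod>k\<in>K. prob (A k))" using BA by (intro prod.cong) auto
      finally show ?thesis .
    qed
    ultimately show "prob (\<Inter>k\<in>K. A k) = (\<Prod>k\<in>K. prob (A k))" by simp
  qed
  then show ?thesis unfolding indep_vars_def2 F_def using rv assms(3) by auto
qed

lemma (in prob_space) indep_var_pair_lborel:
  assumes "indep_vars (\<lambda>_. borel) X I" "i \<in> I" "j \<in> I" "i \<noteq> j"
  shows "indep_var lborel (X i) lborel (X j)"
proof -
  have "indep_vars (\<lambda>_. lborel) X I"
    using assms(1) unfolding indep_vars_def2 by simp
  then have "indep_vars (\<lambda>b. lborel) (\<lambda>b. X (if b then i else j)) UNIV"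
    apply (rule indep_vars_reindex[of "\<lambda>_. lborel" X I "\<lambda>b. if b then i else j" UNIV])
    using assms by (auto simp: inj_on_def)
  moreover have "indep_vars (\<lambda>b. lborel) (\<lambda>b. X (if b then i else j)) UNIV =
      indep_vars (case_bool lborel lborel) (case_bool (X i) (X j)) UNIV"
    by (intro indep_vars_cong) (auto split: bool.split)
  ultimately show ?thesis unfolding indep_var_def by simp
qed

lemma sorted_gap:
  fixes ys :: "real list"
  assumes "sorted ys" "length ys \<ge> 2"
  shows "(Min {ys!(i+1) - ys!i | i. i+1 < length ys} > e) \<longleftrightarrow>
    (\<forall>i j. i < j \<longrightarrow> j < length ys \<longrightarrow> ys!j - ys!i > e)"
proof -
  have eq: "{ys!(i+1) - ys!i | i. i+1 < length ys} = (\<lambda>i. ys!(i+1) - ys!i) ` {..<length ys - 1}"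
    by auto
  have ne: "{..<length ys - 1} \<noteq> {}" proof -
    have "0 \<in> {..<length ys - 1}" using assms(2) by auto
    then show ?thesis by blast
  qed
  have "(Min {ys!(i+1) - ys!i | i. i+1 < length ys} > e) \<longleftrightarrow> (\<forall>i<length ys - 1. ys!(i+1) - ys!i > e)"
    unfolding eq by (subst Min_gr_iff) (use ne in auto)
  also have "\<dots> \<longleftrightarrow> (\<forall>i j. i < j \<longrightarrow> j < length ys \<longrightarrow> ys!j - ys!i > e)"
  proof safe
    fix i j assume h: "\<forall>i<length ys - 1. ys!(i+1) - ys!i > e" "i < j" "j < length ys"
    have "ys!(i+1) \<le> ys!j" using sorted_nth_mono[OF assms(1)] h by auto
    moreover have "ys!(i+1) - ys!i > e" using h by auto
    ultimately show "ys!j - ys!i > e" by linarith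
  next
    fix i assume "\<forall>i j. i < j \<longrightarrow> j < length ys \<longrightarrow> ys!j - ys!i > e" "i < length ys - 1"
    then show "ys!(i+1) - ys!i > e" by auto
  qed
  finally show ?thesis .
qed

lemma sorted_pairs:
  fixes ys :: "real list"
  assumes "sorted ys" "e \<ge> 0"
  shows "(\<forall>i j. i < j \<longrightarrow> j < length ys \<longrightarrow> ys!j - ys!i > e) \<longleftrightarrow>
    (distinct ys \<and> (\<forall>a\<in>set ys. \<forall>b\<in>set ys. a \<noteq> b \<longrightarrow> \<bar>a - b\<bar> > e))"
proof safe
  assume h: "\<forall>i j. i < j \<longrightarrow> j < length ys \<longrightarrow> ys!j - ys!i > e"
  show "distinct ys" unfolding distinct_conv_nth
  proof (intro allI impI)
    fix i j assume ij: "i < length ys" "j < length ys" "i \<noteq> j"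
    show "ys!i \<noteq> ys!j"
    proof (cases "i < j")
      case True then have "ys!j - ys!i > e" using h ij by blast
      then show ?thesis using assms(2) by auto
    next
      case False then have "j < i" using ij by auto
      then have "ys!i - ys!j > e" using h ij by blast
      then show ?thesis using assms(2) by auto
    qed
  qed
  fix a b assume ab: "a \<in> set ys" "b \<in> set ys" "a \<noteq> b"
  then obtain i j where ij: "i < length ys" "j < length ys" "a = ys!i" "b = ys!j"
    by (auto simp: in_set_conv_nth)
  with ab have "i \<noteq> j" by auto
  show "\<bar>a - b\<bar> > e"
  proof (cases "i < j")
    case True then have "ys!j - ys!i > e" using h ij by blast
    then show ?thesis using ij by auto
  next
    case False then have "j < i" using \<open>i \<noteq> j\<close> by auto
    then have "ys!i - ys!j > e" using h ij by blast
    then show ?thesis using ij by auto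
  qed
next
  fix i j assume d: "distinct ys" and h: "\<forall>a\<in>set ys. \<forall>b\<in>set ys. a \<noteq> b \<longrightarrow> \<bar>a - b\<bar> > e"
    and ij: "i < j" "j < length ys"
  have "ys!i \<noteq> ys!j" using d ij by (simp add: nth_eq_iff_index_eq)
  moreover have "ys!i \<le> ys!j" using sorted_nth_mono[OF assms(1)] ij by auto
  moreover have m: "ys!i \<in> set ys" "ys!j \<in> set ys" using ij by auto
  ultimately have "\<bar>ys!i - ys!j\<bar> > e" using h by blast
  then show "ys!j - ys!i > e" using \<open>ys!i \<le> ys!j\<close> by (simp add: abs_if split: if_splits)
qed

lemma idx_pairs:
  fixes xs :: "real list"
  assumes "e \<ge> 0"
  shows "(distinct xs \<and> (\<forall>a\<in>set xs. \<forall>b\<in>set xs. a \<noteq> b \<longrightarrow> \<bar>a - b\<bar> > e)) \<longleftrightarrow>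
    (\<forall>i<length xs. \<forall>j<length xs. i \<noteq> j \<longrightarrow> \<bar>xs!i - xs!j\<bar> > e)"
proof safe
  fix i j assume "distinct xs" "\<forall>a\<in>set xs. \<forall>b\<in>set xs. a \<noteq> b \<longrightarrow> \<bar>a - b\<bar> > e"
    "i < length xs" "j < length xs" "i \<noteq> j"
  then show "\<bar>xs!i - xs!j\<bar> > e" by (auto simp: nth_eq_iff_index_eq)
next
  assume h: "\<forall>i<length xs. \<forall>j<length xs. i \<noteq> j \<longrightarrow> \<bar>xs!i - xs!j\<bar> > e"
  show "distinct xs" unfolding distinct_conv_nth using h assms by fastforce
  fix a b assume "a \<in> set xs" "b \<in> set xs" "a \<noteq> b"
  then show "\<bar>a - b\<bar> > e" using h by (auto simp: in_set_conv_nth)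
qed

lemma min_spacing_iff:
  assumes "length xs \<ge> 2" "e \<ge> 0"
  shows "min_spacing xs > e \<longleftrightarrow> (\<forall>i<length xs. \<forall>j<length xs. i \<noteq> j \<longrightarrow> \<bar>xs!i - xs!j\<bar> > e)"
proof -
  have "min_spacing xs > e \<longleftrightarrow> (\<forall>i j. i < j \<longrightarrow> j < length (sort xs) \<longrightarrow> sort xs!j - sort xs!i > e)"
    unfolding min_spacing_def Let_def using assms by (intro sorted_gap) auto
  also have "\<dots> \<longleftrightarrow> (distinct xs \<and> (\<forall>a\<in>set xs. \<forall>b\<in>set xs. a \<noteq> b \<longrightarrow> \<bar>a - b\<bar> > e))"
    using sorted_pairs[of "sort xs" e] assms by simp
  also have "\<dots> \<longleftrightarrow> (\<forall>i<length xs. \<forall>j<length xs. i \<noteq> j \<longrightarrow> \<bar>xs!i - xs!j\<bar> > e)" using idx_pairs assms by simp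
  finally show ?thesis .
qed

lemma pair_close_bound:
  fixes M :: "'a measure" and Y Z :: "'a \<Rightarrow> real"
  assumes P: "prob_space M"
    and ind: "prob_space.indep_var M lborel Y lborel Z"
    and dY: "distributed M lborel Y (\<lambda>x. ennreal (g x))"
    and dZ: "distributed M lborel Z (\<lambda>x. ennreal (h x))"
    and hb: "\<And>x. h x \<le> C" and hn: "\<And>x. 0 \<le> h x" and e: "e \<ge> 0"
  shows "measure M {\<omega>\<in>space M. \<bar>Y \<omega> - Z \<omega>\<bar> \<le> e} \<le> 2*C*e"
proof -
  interpret prob_space M by (fact P)
  have C: "C \<ge> 0" using hb[of 0] hn[of 0] by linarith
  have rvY[measurable]: "Y \<in> measurable M lborel" using dY by (rule distributed_measurable)
  have rvZ[measurable]: "Z \<in> measurable M lborel" using dZ by (rule distributed_measurable)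
  have [measurable]: "Y \<in> borel_measurable M" "Z \<in> borel_measurable M" using rvY rvZ by simp_all
  have hm[measurable]: "(\<lambda>x. ennreal (h x)) \<in> borel_measurable lborel" using dZ by (rule distributed_borel_measurable)
  have eqd: "distr M lborel Y \<Otimes>\<^sub>M distr M lborel Z = distr M (lborel \<Otimes>\<^sub>M lborel) (\<lambda>\<omega>. (Y \<omega>, Z \<omega>))"
    using ind indep_var_distribution_eq by auto
  have dYe: "distr M lborel Y = density lborel g" using distributed_distr_eq_density[OF dY] .
  have dZe: "distr M lborel Z = density lborel h" using distributed_distr_eq_density[OF dZ] .
  interpret G: prob_space "density lborel g" unfolding dYe[symmetric] by (rule prob_space_distr) measurable
  interpret H: prob_space "density lborel h" unfolding dZe[symmetric] by (rule prob_space_distr) measurable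
  define S where "S = {p::real\<times>real. \<bar>fst p - snd p\<bar> \<le> e}"
  have S1: "S \<in> sets (lborel \<Otimes>\<^sub>M lborel)"
  proof -
    have "{p \<in> space (lborel \<Otimes>\<^sub>M lborel). \<bar>fst p - snd p\<bar> \<le> e} \<in> sets (lborel \<Otimes>\<^sub>M lborel)"
      by measurable
    then show ?thesis by (simp add: S_def space_pair_measure)
  qed
  have S2: "S \<in> sets (density lborel g \<Otimes>\<^sub>M density lborel h)"
    using S1 by (simp cong: sets_pair_measure_cong)
  have Ev: "{\<omega>\<in>space M. \<bar>Y \<omega> - Z \<omega>\<bar> \<le> e} \<in> events" by measurable
  have "emeasure M {\<omega>\<in>space M. \<bar>Y \<omega> - Z \<omega>\<bar> \<le> e} = emeasure (distr M (lborel \<Otimes>\<^sub>M lborel) (\<lambda>\<omega>. (Y \<omega>, Z \<omega>))) S"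
    using S1 by (subst emeasure_distr) (auto simp: S_def intro!: arg_cong[where f="emeasure M"])
  also have "\<dots> = emeasure (density lborel g \<Otimes>\<^sub>M density lborel h) S"
    using eqd dYe dZe by simp
  also have "\<dots> = (\<integral>\<^sup>+x. emeasure (density lborel h) (Pair x -` S) \<partial>density lborel g)"
    by (rule H.emeasure_pair_measure_alt[OF S2])
  also have "\<dots> \<le> (\<integral>\<^sup>+x. ennreal (2*C*e) \<partial>density lborel g)"
  proof (rule nn_integral_mono)
    fix x
    have "Pair x -` S = {x-e..x+e}" by (auto simp: S_def)
    then have "emeasure (density lborel h) (Pair x -` S) = (\<integral>\<^sup>+y. ennreal (h y) * indicator {x-e..x+e} y \<partial>lborel)"
      by (simp add: emeasure_density)
    also have "\<dots> \<le> (\<integral>\<^sup>+y. ennreal C * indicator {x-e..x+e} y \<partial>lborel)"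
      by (intro nn_integral_mono) (auto simp: indicator_def hb ennreal_leI)
    also have "\<dots> = ennreal C * ennreal (2*e)"
      using e by (simp add: nn_integral_cmult_indicator)
    also have "\<dots> = ennreal (2*C*e)" using C e by (simp add: ennreal_mult[symmetric] mult_ac)
    finally show "emeasure (density lborel h) (Pair x -` S) \<le> ennreal (2*C*e)" .
  qed
  also have "\<dots> = ennreal (2*C*e)" using G.emeasure_space_1 by simp
  finally have "ennreal (measure M {\<omega>\<in>space M. \<bar>Y \<omega> - Z \<omega>\<bar> \<le> e}) \<le> ennreal (2*C*e)"
    using Ev by (simp add: emeasure_eq_measure)
  then show ?thesis using C e by (simp add: ennreal_le_iff)
qed

theorem lemma7:
  fixes C :: real
    and M :: "nat \<Rightarrow> 'a measure"
    and X :: "nat \<Rightarrow> nat \<Rightarrow> 'a \<Rightarrow> real"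
    and f :: "nat \<Rightarrow> nat \<Rightarrow> real \<Rightarrow> real"
  assumes prob: "\<And>n. prob_space (M n)"
    and indep: "\<And>n. prob_space.indep_vars (M n) (\<lambda>_. borel) (X n) {..<n}"
    and range01: "\<And>n i \<omega>. i < n \<Longrightarrow> \<omega> \<in> space (M n) \<Longrightarrow> X n i \<omega> \<in> {0..1}"
    and dens: "\<And>n i. i < n \<Longrightarrow> distributed (M n) lborel (X n i) (\<lambda>x. ennreal (f n i x))"
    and dens_nonneg: "\<And>n i x. i < n \<Longrightarrow> 0 \<le> f n i x"
    and dens_cont: "\<And>n i. i < n \<Longrightarrow> continuous_on {0..1} (f n i)"
    and dens_bound: "\<And>n i x. i < n \<Longrightarrow> f n i x \<le> C"
  shows "\<forall>\<eta>>0. \<forall>x>0.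
    (\<lambda>n. measure (M n) {\<omega> \<in> space (M n).
        real n powr (2 + \<eta>) * min_spacing (map (\<lambda>i. X n i \<omega>) [0..<n]) > x})
    \<longlonglongrightarrow> 1"
proof (intro allI impI)
  fix \<eta> x :: real assume \<eta>: "\<eta> > 0" and x: "x > 0"
  define L where "L n = 1 - 2*C*x * real n powr (-\<eta>)" for n :: nat
  have Llim: "L \<longlonglongrightarrow> 1"
  proof -
    have "(\<lambda>n. real n powr (-\<eta>)) \<longlonglongrightarrow> 0"
      by (rule tendsto_neg_powr) (use \<eta> filterlim_real_sequentially in auto)
    then have "(\<lambda>n. 1 - 2*C*x * real n powr (-\<eta>)) \<longlonglongrightarrow> 1 - 2*C*x*0"
      by (intro tendsto_intros)
    moreover have "L = (\<lambda>n. 1 - 2*C*x * real n powr (-\<eta>))" by (rule ext) (simp add: L_def)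
    ultimately show ?thesis by simp
  qed
  have bound: "L n \<le> measure (M n) {\<omega> \<in> space (M n).
        real n powr (2 + \<eta>) * min_spacing (map (\<lambda>i. X n i \<omega>) [0..<n]) > x} \<and>
      measure (M n) {\<omega> \<in> space (M n).
        real n powr (2 + \<eta>) * min_spacing (map (\<lambda>i. X n i \<omega>) [0..<n]) > x} \<le> 1"
    if n: "n \<ge> 2" for n
  proof -
    interpret prob_space "M n" by (rule prob)
    define e where "e = x / real n powr (2+\<eta>)"
    have npos: "real n powr (2+\<eta>) > 0" using n by simp
    have e0: "e > 0" using x npos by (simp add: e_def)
    have C0: "C \<ge> 0" using dens_nonneg[of 0 n 0] dens_bound[of 0 n 0] n by linarith
    define Pn where "Pn = {p \<in> {..<n} \<times> {..<n}. fst p \<noteq> snd p}"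
    have finP: "finite Pn" unfolding Pn_def by auto
    have cardP: "card Pn \<le> n * n"
    proof -
      have "card Pn \<le> card ({..<n} \<times> {..<n})" unfolding Pn_def by (intro card_mono) auto
      then show ?thesis by (simp add: card_cartesian_product)
    qed
    define E where "E p = {\<omega>\<in>space (M n). \<bar>X n (fst p) \<omega> - X n (snd p) \<omega>\<bar> \<le> e}" for p
    have Em: "E p \<in> events" if "p \<in> Pn" for p
    proof -
      have [measurable]: "X n (fst p) \<in> borel_measurable (M n)" "X n (snd p) \<in> borel_measurable (M n)"
        using distributed_measurable[OF dens[of "fst p" n]] distributed_measurable[OF dens[of "snd p" n]] that
        by (auto simp: Pn_def)
      show ?thesis unfolding E_def by measurable
    qed
    have key: "x < real n powr (2+\<eta>) * min_spacing (map (\<lambda>i. X n i \<omega>) [0..<n]) \<longleftrightarrow>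
        (\<forall>i<n. \<forall>j<n. i \<noteq> j \<longrightarrow> \<bar>X n i \<omega> - X n j \<omega>\<bar> > e)" for \<omega>
    proof -
      have "x < real n powr (2+\<eta>) * min_spacing (map (\<lambda>i. X n i \<omega>) [0..<n]) \<longleftrightarrow>
          e < min_spacing (map (\<lambda>i. X n i \<omega>) [0..<n])"
        unfolding e_def using npos by (simp add: divide_less_eq mult.commute)
      also have "\<dots> \<longleftrightarrow> (\<forall>i<n. \<forall>j<n. i \<noteq> j \<longrightarrow> \<bar>X n i \<omega> - X n j \<omega>\<bar> > e)"
        using min_spacing_iff[of "map (\<lambda>i. X n i \<omega>) [0..<n]" e] n e0 by simp
      finally show ?thesis .
    qed
    have seteq: "{\<omega> \<in> space (M n). real n powr (2 + \<eta>) * min_spacing (map (\<lambda>i. X n i \<omega>) [0..<n]) > x}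
        = space (M n) - (\<Union>p\<in>Pn. E p)"
      unfolding key by (auto simp: E_def Pn_def not_le) (meson not_less)
    have UE: "(\<Union>p\<in>Pn. E p) \<in> events" using Em finP by (intro sets.finite_UN) auto
    have "measure (M n) (space (M n) - (\<Union>p\<in>Pn. E p)) = 1 - measure (M n) (\<Union>p\<in>Pn. E p)"
      by (rule prob_compl[OF UE])
    moreover have "measure (M n) (\<Union>p\<in>Pn. E p) \<le> (\<Sum>p\<in>Pn. measure (M n) (E p))"
      using finP Em by (intro finite_measure_subadditive_finite) auto
    moreover have "(\<Sum>p\<in>Pn. measure (M n) (E p)) \<le> (\<Sum>p\<in>Pn. 2*C*e)"
    proof (rule sum_mono)
      fix p assume p: "p \<in> Pn"
      then have ij: "fst p < n" "snd p < n" "fst p \<noteq> snd p" by (auto simp: Pn_def)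
      have ind: "indep_var lborel (X n (fst p)) lborel (X n (snd p))"
        using indep_var_pair_lborel[OF indep[of n]] ij by auto
      show "measure (M n) (E p) \<le> 2*C*e" unfolding E_def
        by (rule pair_close_bound[OF prob ind dens[OF ij(1)] dens[OF ij(2)]])
           (use ij dens_bound dens_nonneg e0 in auto)
    qed
    moreover have "(\<Sum>p\<in>Pn. 2*C*e) \<le> real (n*n) * (2*C*e)"
    proof -
      have "real (card Pn) \<le> real (n*n)" using cardP by linarith
      then have "real (card Pn) * (2*C*e) \<le> real (n*n) * (2*C*e)"
        using C0 e0 by (intro mult_right_mono) auto
      then show ?thesis by simp
    qed
    moreover have "real (n*n) * (2*C*e) = 2*C*x * real n powr (-\<eta>)"
    proof -
      have "real n powr (2+\<eta>) = real n * real n * real n powr \<eta>"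
        using n by (simp add: powr_add power2_eq_square)
      moreover have "real n powr (-\<eta>) = 1 / real n powr \<eta>" by (simp add: powr_minus_divide)
      ultimately show ?thesis using n unfolding e_def by (simp add: field_simps)
    qed
    ultimately have "L n \<le> measure (M n) (space (M n) - (\<Union>p\<in>Pn. E p))"
      unfolding L_def by linarith
    then show ?thesis unfolding seteq by simp
  qed
  show "(\<lambda>n. measure (M n) {\<omega> \<in> space (M n).
        real n powr (2 + \<eta>) * min_spacing (map (\<lambda>i. X n i \<omega>) [0..<n]) > x}) \<longlonglongrightarrow> 1"
  proof (rule tendsto_sandwich[OF _ _ Llim tendsto_const])
    show "\<forall>\<^sub>F n in sequentially. L n \<le> measure (M n) {\<omega> \<in> space (M n).
        real n powr (2 + \<eta>) * min_spacing (map (\<lambda>i. X n i \<omega>) [0..<n]) > x}"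
      using bound by (intro eventually_sequentiallyI[of 2]) auto
    show "\<forall>\<^sub>F n in sequentially. measure (M n) {\<omega> \<in> space (M n).
        real n powr (2 + \<eta>) * min_spacing (map (\<lambda>i. X n i \<omega>) [0..<n]) > x} \<le> 1"
      using bound by (intro eventually_sequentiallyI[of 2]) auto
  qed
qed

end
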